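(* Let $\lambda\in X^+$ be a $p$-core. Let $\alpha=\varepsilon_i+\varepsilon_j$ with $1\le i<j\le l(\lambda)$ and integers $a,l\ge1$ with $\langle\lambda+\rho,\alpha^\vee\rangle=a+lp$, $(\lambda+\rho)_j-a>0$ and $\chi(s_{\alpha,l}\cdot\lambda)\ne0$. Then the entries of $s_{\alpha,l}(\lambda+\rho)$ are distinct and strictly positive. Put $\mu_\alpha=\mathrm{sort}(s_{\alpha,l}(\lambda+\rho))-\rho$. Then $\mu_\alpha$ is a partition with $\mu_\alpha\subsetneq\lambda$, and $\mu_\alpha$ is conjugate to $\lambda$ under the dot action of $W_p(D_{l(\lambda)})$. Furthermore, the map $(\alpha,l)\mapsto\mu_\alpha$, defined on the set of all such pairs $(\alpha,l)$, is injective.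
   Context: Setup: $p>2$ is a prime, $m\ge1$, weight lattice $X=\mathbb Z^m$ of $\mathrm{Sp}_{2m}$ with standard basis $\varepsilon_i$, standard inner product, $\alpha^\vee=2\alpha/\langle\alpha,\alpha\rangle$. $X^+=\{\lambda\in\mathbb Z^m:\lambda_1\ge\dots\ge\lambda_m\ge0\}$ (partitions with at most $m$ parts); $l(\lambda)$ is the number of nonzero entries. $\rho=(m,m-1,\dots,1)$. $s_{\alpha,l}(x)=x-(\langle x,\alpha^\vee\rangle-lp)\alpha$, $w\cdot x=w(x+\rho)-\rho$. $\chi(\mu)$ is the Weyl character; $\chi(\mu)=0$ iff some entry of $\mu+\rho$ is $0$ or two entries are equal up to sign. A $p$-core is $\lambda\in X^+$ such that for all $i$ and all integers $l\ge1$ with $(\lambda+\rho)_i-lp>0$, the number $(\lambda+\rho)_i-lp$ occurs as an entry of $\lambda+\rho$. $\mathrm{sort}(\mu)$ is the weakly decreasing rearrangement of $\mu\in\mathbb Z^m$; $\mu\subseteq\nu$ means $\mu_i\le\nu_i$ for all $i$. For $1\le t\le m$, $W_p(D_t)$ is the group of affine transformations of $\mathbb R^m$ generated by the $s_{\alpha,l}$ with $\alpha=\varepsilon_i\pm\varepsilon_j$, $1\le i<j\le t$, $l\in\mathbb Z$. *)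

theory Defs
  imports Main "HOL-Computational_Algebra.Primes"
begin

(* Weights in X = Z^m are int lists of length m; entry k (0-based) is the
   coefficient of epsilon_(k+1). *)

definition vadd :: "int list \<Rightarrow> int list \<Rightarrow> int list" where
  "vadd x y = map2 (+) x y"

definition vsub :: "int list \<Rightarrow> int list \<Rightarrow> int list" where
  "vsub x y = map2 (-) x y"

definition smul :: "int \<Rightarrow> int list \<Rightarrow> int list" where
  "smul c x = map ((*) c) x"

definition winner :: "int list \<Rightarrow> int list \<Rightarrow> int" where
  "winner x y = sum_list (map2 (*) x y)"

(* <x, alpha^vee> with alpha^vee = 2 alpha / <alpha,alpha>; integral for roots of C_m *)
definition coroot_pair :: "int list \<Rightarrow> int list \<Rightarrow> int" where
  "coroot_pair x \<alpha> = (2 * winner x \<alpha>) div winner \<alpha> \<alpha>"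

definition refl_aff :: "nat \<Rightarrow> int list \<Rightarrow> int \<Rightarrow> int list \<Rightarrow> int list" where
  "refl_aff p \<alpha> l x = vsub x (smul (coroot_pair x \<alpha> - l * int p) \<alpha>)"

definition eps :: "nat \<Rightarrow> nat \<Rightarrow> int list" where
  "eps m i = map (\<lambda>k. if k = i then 1 else 0) [0..<m]"

definition rho :: "nat \<Rightarrow> int list" where
  "rho m = map (\<lambda>k. int (m - k)) [0..<m]"

definition dot :: "(int list \<Rightarrow> int list) \<Rightarrow> int list \<Rightarrow> nat \<Rightarrow> int list" where
  "dot w x m = vsub (w (vadd x (rho m))) (rho m)"

definition dominant :: "nat \<Rightarrow> int list \<Rightarrow> bool" where
  "dominant m lam \<longleftrightarrow> length lam = m \<and> sorted_wrt (\<ge>) lam \<and> (\<forall>x\<in>set lam. 0 \<le> x)"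

definition lpart :: "int list \<Rightarrow> nat" where
  "lpart lam = length (filter (\<lambda>x. x \<noteq> 0) lam)"

(* chi(mu) = 0 iff some entry of mu+rho is 0 or two entries are equal up to sign *)
definition weyl_char_zero :: "nat \<Rightarrow> int list \<Rightarrow> bool" where
  "weyl_char_zero m \<mu> \<longleftrightarrow>
     (let v = vadd \<mu> (rho m) in
       (\<exists>i<m. v ! i = 0) \<or> (\<exists>i<m. \<exists>j<m. i \<noteq> j \<and> \<bar>v ! i\<bar> = \<bar>v ! j\<bar>))"

definition p_core :: "nat \<Rightarrow> nat \<Rightarrow> int list \<Rightarrow> bool" where
  "p_core p m lam \<longleftrightarrow> dominant m lam \<and>
     (let v = vadd lam (rho m) in
       \<forall>i<m. \<forall>l::int. l \<ge> 1 \<longrightarrow> v ! i - l * int p > 0 \<longrightarrow> v ! i - l * int p \<in> set v)"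

definition sort_desc :: "int list \<Rightarrow> int list" where
  "sort_desc xs = rev (sort xs)"

definition wsubseteq :: "int list \<Rightarrow> int list \<Rightarrow> bool" where
  "wsubseteq \<mu> \<nu> \<longleftrightarrow> list_all2 (\<le>) \<mu> \<nu>"

(* The generators are involutions, so closure under composition with generators
   (starting from the identity) is the generated group. *)
inductive_set WpD :: "nat \<Rightarrow> nat \<Rightarrow> nat \<Rightarrow> (int list \<Rightarrow> int list) set"
  for p :: nat and m :: nat and t :: nat where
  WpD_id: "id \<in> WpD p m t"
| WpD_step: "\<lbrakk> w \<in> WpD p m t; i < j; j < t;
              \<alpha> = vadd (eps m i) (eps m j) \<or> \<alpha> = vsub (eps m i) (eps m j) \<rbrakk>
             \<Longrightarrow> refl_aff p \<alpha> l \<circ> w \<in> WpD p m t"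

end

theory Submission
  imports Defs
begin


lemma len_vadd[simp]: "length (vadd x y) = min (length x) (length y)" by (simp add: vadd_def)
lemma len_vsub[simp]: "length (vsub x y) = min (length x) (length y)" by (simp add: vsub_def)
lemma len_smul[simp]: "length (smul c x) = length x" by (simp add: smul_def)
lemma len_eps[simp]: "length (eps m i) = m" by (simp add: eps_def)
lemma len_rho[simp]: "length (rho m) = m" by (simp add: rho_def)
lemma nth_vadd[simp]: "k < length x \<Longrightarrow> k < length y \<Longrightarrow> vadd x y ! k = x!k + y!k" by (simp add: vadd_def)
lemma nth_vsub[simp]: "k < length x \<Longrightarrow> k < length y \<Longrightarrow> vsub x y ! k = x!k - y!k" by (simp add: vsub_def)
lemma nth_smul[simp]: "k < length x \<Longrightarrow> smul c x ! k = c * x!k" by (simp add: smul_def)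
lemma nth_eps[simp]: "k < m \<Longrightarrow> eps m i ! k = (if k = i then 1 else 0)" by (simp add: eps_def)
lemma nth_rho[simp]: "k < m \<Longrightarrow> rho m ! k = int (m - k)" by (simp add: rho_def)

lemma winner_nth: "length x = length y \<Longrightarrow> winner x y = (\<Sum>k<length x. x!k * y!k)"
  unfolding winner_def by (simp add: sum_list_sum_nth atLeast0LessThan)

lemma winner_plus: assumes "length x = m" "i < m" "j < m" "i \<noteq> j"
  shows "winner x (vadd (eps m i) (eps m j)) = x!i + x!j"
proof -
  have "winner x (vadd (eps m i) (eps m j)) = (\<Sum>k<m. (if k = i then x!k else 0) + (if k = j then x!k else 0))"
    using assms by (auto simp: winner_nth intro!: sum.cong)
  also have "\<dots> = x!i + x!j" using assms by (simp add: sum.distrib)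
  finally show ?thesis .
qed

lemma winner_minus: assumes "length x = m" "i < m" "j < m" "i \<noteq> j"
  shows "winner x (vsub (eps m i) (eps m j)) = x!i - x!j"
proof -
  have "winner x (vsub (eps m i) (eps m j)) = (\<Sum>k<m. (if k = i then x!k else 0) - (if k = j then x!k else 0))"
    using assms by (auto simp: winner_nth intro!: sum.cong)
  also have "\<dots> = x!i - x!j" using assms by (simp add: sum_subtractf)
  finally show ?thesis .
qed

lemma refl_plus: assumes "length x = m" "i < m" "j < m" "i \<noteq> j"
  shows "refl_aff p (vadd (eps m i) (eps m j)) l x =
     x[i := x!i - (x!i + x!j - l * int p), j := x!j - (x!i + x!j - l * int p)]"
proof -
  have c: "coroot_pair x (vadd (eps m i) (eps m j)) = x!i + x!j"
    using winner_plus[OF assms] winner_plus[of "vadd (eps m i) (eps m j)" m i j] assms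
    by (simp add: coroot_pair_def)
  show ?thesis using assms
    by (intro nth_equalityI) (auto simp: refl_aff_def c nth_list_update)
qed

lemma refl_minus: assumes "length x = m" "i < m" "j < m" "i \<noteq> j"
  shows "refl_aff p (vsub (eps m i) (eps m j)) 0 x = x[i := x!j, j := x!i]"
proof -
  have c: "coroot_pair x (vsub (eps m i) (eps m j)) = x!i - x!j"
    using winner_minus[OF assms] winner_minus[of "vsub (eps m i) (eps m j)" m i j] assms
    by (simp add: coroot_pair_def)
  show ?thesis using assms
    by (intro nth_equalityI) (auto simp: refl_aff_def c nth_list_update)
qed




lemma WpD_comp: "w' \<in> WpD p m t \<Longrightarrow> w \<in> WpD p m t \<Longrightarrow> w' \<circ> w \<in> WpD p m t"
proof (induction rule: WpD.induct)
  case WpD_id then show ?case by simp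
next
  case (WpD_step w' i j \<alpha> l)
  have "refl_aff p \<alpha> l \<circ> w' \<circ> w = refl_aff p \<alpha> l \<circ> (w' \<circ> w)" by auto
  then show ?case using WpD_step by (metis WpD.WpD_step)
qed

lemma WpD_mono: assumes "w \<in> WpD p m t" "t \<le> t'" shows "w \<in> WpD p m t'"
  using assms(1)
proof (induction rule: WpD.induct)
  case WpD_id then show ?case by (rule WpD.WpD_id)
next
  case (WpD_step w i j \<alpha> l)
  then show ?case using assms(2) by (intro WpD.WpD_step) auto
qed



lemma WpD_sort:
  assumes "L \<le> m" "length x = m" "length y = m" "distinct y" "set x = set y"
    "\<forall>k. L \<le> k \<longrightarrow> k < m \<longrightarrow> x!k = y!k"
  shows "\<exists>w \<in> WpD p m L. w x = y"
  using assms
proof (induction L arbitrary: x)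
  case 0
  from "0.prems"(6) have "\<forall>k<m. x!k = y!k" by simp
  then have "x = y" using "0.prems"(2,3) by (simp add: list_eq_iff_nth_eq)
  then show ?case using WpD.WpD_id[of p m 0] by (metis id_apply)
next
  case (Suc L)
  note P = Suc.prems
  have Lm: "L < m" using P(1) by simp
  have "y!L \<in> set x" using P(3,5) Lm by simp
  then obtain q where q: "q < m" "x!q = y!L" using P(2) by (metis in_set_conv_nth)
  have "q \<le> L"
  proof (rule ccontr)
    assume nq: "\<not> q \<le> L"
    then have "x!q = y!q" using P(6) q(1) by simp
    then show False using q P(3,4) nq Lm
      using nth_eq_iff_index_eq[of y q L] by simp
  qed
  show ?case
  proof (cases "q = L")
    case True
    have "\<forall>k. L \<le> k \<longrightarrow> k < m \<longrightarrow> x!k = y!k"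
    proof (intro allI impI)
      fix k assume "L \<le> k" "k < m"
      then show "x!k = y!k" using P(6) q True by (cases "k = L") simp_all
    qed
    then obtain w where "w \<in> WpD p m L" "w x = y" using Suc.IH[of x] P(2-5) Lm by auto
    then show ?thesis using WpD_mono[of w p m L "Suc L"] by auto
  next
    case False
    then have qL: "q < L" using \<open>q \<le> L\<close> by simp
    define x' where "x' = x[q := x!L, L := x!q]"
    have rx: "refl_aff p (vsub (eps m q) (eps m L)) 0 x = x'"
      unfolding x'_def using refl_minus[of x m q L p] P(2) qL Lm by simp
    have lx': "length x' = m" using P(2) unfolding x'_def by simp
    have "\<forall>k. L \<le> k \<longrightarrow> k < m \<longrightarrow> x'!k = y!k"
    proof (intro allI impI)
      fix k assume k: "L \<le> k" "k < m"
      show "x'!k = y!k"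
      proof (cases "k = L")
        case True then show ?thesis using q P(2) k unfolding x'_def by simp
      next
        case False then show ?thesis using P(6) P(2) k qL unfolding x'_def by simp
      qed
    qed
    moreover have "set x' = set y" using P(2,5) qL Lm unfolding x'_def by simp
    ultimately obtain w where w: "w \<in> WpD p m L" "w x' = y" using Suc.IH[of x'] lx' P(3,4) Lm by auto
    have r: "refl_aff p (vsub (eps m q) (eps m L)) 0 \<in> WpD p m (Suc L)"
      using WpD.WpD_step[OF WpD.WpD_id, where i=q and j=L and t="Suc L" and p=p and m=m and \<alpha>="vsub (eps m q) (eps m L)" and l=0] qL by simp
    have "w \<circ> refl_aff p (vsub (eps m q) (eps m L)) 0 \<in> WpD p m (Suc L)"
      using WpD_comp[OF WpD_mono[OF w(1)] r] by simp
    then show ?thesis using w rx by (intro bexI[of _ "w \<circ> refl_aff p (vsub (eps m q) (eps m L)) 0"]) auto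
  qed
qed




lemma sdec_distinct: "sorted_wrt (>) (w::int list) \<Longrightarrow> distinct w"
  by (metis sorted_wrt_rev strict_sorted_iff distinct_rev)

lemma sdec_lt: "sorted_wrt (>) (w::int list) \<Longrightarrow> q < length w \<Longrightarrow> r < length w \<Longrightarrow> w!r > w!q \<Longrightarrow> r < q"
  by (metis linorder_neqE_nat sorted_wrt_nth_less order.asym)

lemma sdec_gap: assumes "sorted_wrt (>) (w::int list)" "k \<le> k'" "k' < length w"
  shows "w!k \<ge> w!k' + int (k' - k)"
  using assms(2,3)
proof (induction k' rule: dec_induct)
  case base then show ?case by simp
next
  case (step n)
  have "w!n > w!(Suc n)" using sorted_wrt_nth_less[OF assms(1), of n "Suc n"] step by simp
  then show ?case using step by auto
qed

lemma sdec_card: assumes "sorted_wrt (>) (w::int list)" "q < length w"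
  shows "card {x\<in>set w. x > w!q} = q"
proof -
  have "{x\<in>set w. x > w!q} = nth w ` {..<q}"
  proof
    show "{x\<in>set w. x > w!q} \<subseteq> nth w ` {..<q}"
    proof
      fix x assume "x \<in> {x\<in>set w. x > w!q}"
      then obtain r where "r < length w" "x = w!r" "w!r > w!q" by (auto simp: in_set_conv_nth)
      then show "x \<in> nth w ` {..<q}" using sdec_lt[OF assms(1) assms(2)] by auto
    qed
    show "nth w ` {..<q} \<subseteq> {x\<in>set w. x > w!q}"
      using assms sorted_wrt_nth_less[OF assms(1), of _ q] by auto
  qed
  moreover have "inj_on (nth w) {..<q}" using assms sdec_distinct by (intro inj_on_nth) auto
  ultimately show ?thesis by (simp add: card_image)
qed

lemma sdec_pos: assumes "sorted_wrt (>) (w::int list)" "t \<in> set w" "card {x\<in>set w. x > t} = k"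
  shows "k < length w \<and> w!k = t"
proof -
  obtain q where "q < length w" "w!q = t" using assms(2) by (auto simp: in_set_conv_nth)
  then show ?thesis using sdec_card[OF assms(1)] assms(3) by auto
qed

lemma sort_le:
  assumes "length s = m" "length v = m" "sorted_wrt (>) (v::int list)" "\<forall>k<m. s!k \<le> v!k"
    "sorted_wrt (>) y" "set y = set s" "length y = m" "k < m"
  shows "y!k \<le> v!k"
proof (rule ccontr)
  assume "\<not> y!k \<le> v!k"
  define t where "t = y!k"
  have "nth y ` {..k} \<subseteq> {x\<in>set s. x \<ge> t}"
  proof
    fix x assume "x \<in> nth y ` {..k}"
    then obtain r where r: "r \<le> k" "x = y!r" by auto
    have "y!r \<ge> y!k"
    proof (cases "r = k")
      case False then show ?thesis using sorted_wrt_nth_less[OF assms(5), of r k] r assms(7,8) by simp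
    qed simp
    moreover have "y!r \<in> set s" using assms(6,7,8) r nth_mem[of r y] by simp
    ultimately show "x \<in> {x\<in>set s. x \<ge> t}" using r t_def by simp
  qed
  moreover have "inj_on (nth y) {..k}" using assms sdec_distinct by (intro inj_on_nth) auto
  ultimately have c1: "k + 1 \<le> card {x\<in>set s. x \<ge> t}"
  proof -
    assume sub: "nth y ` {..k} \<subseteq> {x\<in>set s. x \<ge> t}" and inj: "inj_on (nth y) {..k}"
    have "card (nth y ` {..k}) = k + 1" using inj by (simp add: card_image)
    moreover have "card (nth y ` {..k}) \<le> card {x\<in>set s. x \<ge> t}"
      using sub by (intro card_mono) simp_all
    ultimately show ?thesis by simp
  qed
  have "{x\<in>set s. x \<ge> t} \<subseteq> nth s ` {q. q < m \<and> s!q \<ge> t}"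
    using assms(1) by (auto simp: in_set_conv_nth)
  then have "card {x\<in>set s. x \<ge> t} \<le> card (nth s ` {q. q < m \<and> s!q \<ge> t})"
    by (intro card_mono) simp_all
  also have "\<dots> \<le> card {q. q < m \<and> s!q \<ge> t}" by (intro card_image_le) simp
  also have "\<dots> \<le> card {q. q < m \<and> v!q \<ge> t}"
    using assms(4) by (intro card_mono) auto
  also have "\<dots> \<le> card {..<k}"
  proof (intro card_mono)
    show "{q. q < m \<and> v!q \<ge> t} \<subseteq> {..<k}"
    proof
      fix q assume "q \<in> {q. q < m \<and> v!q \<ge> t}"
      then have "q < m" "v!q > v!k" using \<open>\<not> y!k \<le> v!k\<close> t_def by auto
      then show "q \<in> {..<k}" using sdec_lt[OF assms(3), of k q] assms by auto
    qed
  qed auto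
  finally show False using c1 by simp
qed

lemma lpart_props: assumes "dominant m lam"
  shows "lpart lam \<le> m" "\<And>k. lpart lam \<le> k \<Longrightarrow> k < m \<Longrightarrow> lam!k = 0"
proof -
  have len: "length lam = m" using assms by (simp add: dominant_def)
  have lp: "lpart lam = card {q. q < m \<and> lam!q \<noteq> 0}"
    unfolding lpart_def using len by (simp add: length_filter_conv_card)
  show "lpart lam \<le> m" unfolding lpart_def by (metis len length_filter_le)
  fix k assume k: "lpart lam \<le> k" "k < m"
  show "lam!k = 0"
  proof (rule ccontr)
    assume "lam!k \<noteq> 0"
    moreover have "lam!k \<in> set lam" using len k by simp
    ultimately have "lam!k > 0" using assms by (auto simp: dominant_def)
    moreover have "\<forall>q\<le>k. lam!q \<ge> lam!k" using assms k len
      by (auto simp: dominant_def sorted_wrt_iff_nth_less le_less)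
    ultimately have "{..k} \<subseteq> {q. q < m \<and> lam!q \<noteq> 0}" using k by force
    then have "card {..k} \<le> lpart lam" unfolding lp by (intro card_mono) auto
    then show False using k by simp
  qed
qed

lemma v_props: assumes "dominant m lam" "v = vadd lam (rho m)"
  shows "length v = m" "sorted_wrt (>) v" "\<And>k. k < m \<Longrightarrow> v!k \<ge> 1"
    "\<And>k. lpart lam \<le> k \<Longrightarrow> k < m \<Longrightarrow> v!k = int (m - k)"
proof -
  have len: "length lam = m" using assms by (simp add: dominant_def)
  have nn: "\<And>k. k < m \<Longrightarrow> lam!k \<ge> 0"
  proof -
    fix k assume "k < m"
    then have "lam!k \<in> set lam" using len by simp
    then show "lam!k \<ge> 0" using assms(1) by (auto simp: dominant_def)
  qed
  have vk: "\<And>k. k < m \<Longrightarrow> v!k = lam!k + int (m - k)" using assms(2) len by simp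
  show "length v = m" using assms len by simp
  show "sorted_wrt (>) v"
  proof (subst sorted_wrt_iff_nth_less, intro allI impI)
    fix i j assume ij: "i < j" "j < length v"
    then have "lam!i \<ge> lam!j" using assms(1) len sorted_wrt_nth_less[of "(\<ge>)" lam i j]
      by (simp add: dominant_def assms(2))
    moreover have "int (m - i) > int (m - j)" using ij assms(2) len by simp
    ultimately show "v!i > v!j" using vk ij assms(2) len by simp
  qed
  show "\<And>k. k < m \<Longrightarrow> v!k \<ge> 1" using vk nn by fastforce
  show "\<And>k. lpart lam \<le> k \<Longrightarrow> k < m \<Longrightarrow> v!k = int (m - k)"
    using vk lpart_props[OF assms(1)] by simp
qed




lemma coroot_plus: assumes "length x = m" "i < m" "j < m" "i \<noteq> j"
  shows "coroot_pair x (vadd (eps m i) (eps m j)) = x!i + x!j"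
  using winner_plus[OF assms] winner_plus[of "vadd (eps m i) (eps m j)" m i j] assms
  by (simp add: coroot_pair_def)

lemma elem:
  assumes dom: "dominant m lam" and v: "v = vadd lam (rho m)" and L: "L = lpart lam"
   and ij: "i < j" "j < L" and a: "a \<ge> 1" "v!j - a > 0"
   and s: "s = v[i := v!i - a, j := v!j - a]" and ds: "distinct s"
  shows "(\<forall>x\<in>set s. x > 0) \<and> dominant m (vsub (sort_desc s) (rho m)) \<and>
     wsubseteq (vsub (sort_desc s) (rho m)) lam \<and> vsub (sort_desc s) (rho m) \<noteq> lam \<and>
     (\<exists>\<pi>\<in>WpD p m L. \<pi> s = sort_desc s)"
proof -
  note vp = v_props[OF dom v]
  have Lm: "L \<le> m" using lpart_props(1)[OF dom] L by simp
  have lv: "length v = m" by (rule vp(1))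
  have sv: "sorted_wrt (>) v" by (rule vp(2))
  have im: "i < m" "j < m" using ij Lm by auto
  have ls: "length s = m" using s lv by simp
  have snth: "\<And>k. k < m \<Longrightarrow> s!k = (if k = i then v!i - a else if k = j then v!j - a else v!k)"
    using s lv ij by (auto simp: nth_list_update)
  have vij: "v!i > v!j" using sorted_wrt_nth_less[OF sv, of i j] ij im lv by simp
  have spos: "\<And>k. k < m \<Longrightarrow> s!k > 0"
  proof -
    fix k assume k: "k < m"
    show "s!k > 0" using snth[OF k] vp(3)[OF k] a vij by auto
  qed
  have ple: "\<forall>k<m. s!k \<le> v!k" using snth a by auto
  define y where "y = sort_desc s"
  have ly: "length y = m" using ls y_def by (simp add: sort_desc_def)
  have sety: "set y = set s" using y_def by (simp add: sort_desc_def)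
  have sy: "sorted_wrt (>) y"
  proof -
    have "sorted_wrt (<) (sort s)" using ds by (simp add: strict_sorted_iff)
    then show ?thesis using y_def by (simp add: sort_desc_def sorted_wrt_rev)
  qed
  have ygap: "\<And>k. k < m \<Longrightarrow> y!k \<ge> int (m - k)"
  proof -
    fix k assume k: "k < m"
    have "y!(m-1) \<in> set s" using sety ly k nth_mem[of "m-1" y] by simp
    then obtain q where "q < m" "s!q = y!(m-1)" using ls by (auto simp: in_set_conv_nth)
    then have "y!(m-1) > 0" using spos by metis
    moreover have "y!k \<ge> y!(m-1) + int (m - 1 - k)" using sdec_gap[OF sy, of k "m-1"] k ly by simp
    ultimately show "y!k \<ge> int (m - k)" using k by linarith
  qed
  define mu where "mu = vsub y (rho m)"
  have lmu: "length mu = m" using mu_def ly by simp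
  have munth: "\<And>k. k < m \<Longrightarrow> mu!k = y!k - int (m - k)" using mu_def ly by simp
  have d1: "dominant m mu"
    unfolding dominant_def
  proof (intro conjI)
    show "length mu = m" by (rule lmu)
    show "sorted_wrt (\<ge>) mu"
    proof (subst sorted_wrt_iff_nth_less, intro allI impI)
      fix q r assume qr: "q < r" "r < length mu"
      have "y!q \<ge> y!r + int (r - q)" using sdec_gap[OF sy, of q r] qr lmu ly by simp
      then show "mu!r \<le> mu!q" using munth qr lmu by simp
    qed
    show "\<forall>x\<in>set mu. 0 \<le> x"
    proof
      fix x assume "x \<in> set mu"
      then obtain k where "k < m" "x = mu!k" using lmu by (auto simp: in_set_conv_nth)
      then show "0 \<le> x" using munth ygap by fastforce
    qed
  qed
  have yle: "\<And>k. k < m \<Longrightarrow> y!k \<le> v!k"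
    using sort_le[OF ls lv sv ple sy sety ly] by blast
  have lam_nth: "\<And>k. k < m \<Longrightarrow> v!k = lam!k + int (m - k)"
    using v dom by (simp add: dominant_def)
  have llam: "length lam = m" using dom by (simp add: dominant_def)
  have d2: "wsubseteq mu lam"
    unfolding wsubseteq_def list_all2_conv_all_nth
    using lmu llam munth yle lam_nth by fastforce
  have d3: "mu \<noteq> lam"
  proof
    assume "mu = lam"
    then have "\<forall>k<m. y!k = v!k" using munth lam_nth by fastforce
    then have "y = v" using ly lv by (simp add: list_eq_iff_nth_eq)
    then have "set s = set v" using sety by simp
    moreover have "distinct v" using sdec_distinct[OF sv] .
    ultimately have e: "sum_list s = sum_list v" using ds sum_list_distinct_conv_sum_set[of s "\<lambda>x. x"] sum_list_distinct_conv_sum_set[of v "\<lambda>x. x"] by simp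
    have "(\<Sum>k = 0..<m. s!k) < (\<Sum>k = 0..<m. v!k)"
    proof (rule sum_strict_mono_ex1)
      show "\<forall>k\<in>{0..<m}. s!k \<le> v!k" using ple by simp
      show "\<exists>k\<in>{0..<m}. s!k < v!k" using snth[of j] im ij a by (intro bexI[of _ j]) auto
    qed simp
    then show False using e ls lv by (simp add: sum_list_sum_nth)
  qed
  have tail: "\<forall>k. L \<le> k \<longrightarrow> k < m \<longrightarrow> s!k = y!k"
  proof (intro allI impI)
    fix k assume k: "L \<le> k" "k < m"
    have sk: "s!k = int (m - k)" using snth[OF k(2)] ij k vp(4) L by auto
    have "{x\<in>set y. x > int (m - k)} = nth s ` {..<k}"
    proof
      show "{x\<in>set y. x > int (m - k)} \<subseteq> nth s ` {..<k}"
      proof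
        fix x assume "x \<in> {x\<in>set y. x > int (m - k)}"
        then obtain q where q: "q < m" "x = s!q" "s!q > int (m - k)" using sety ls
          by (auto simp: in_set_conv_nth)
        have "q < k"
        proof (cases "L \<le> q")
          case True
          then have "s!q = int (m - q)" using snth[OF q(1)] ij vp(4) L q by auto
          then show ?thesis using q k by linarith
        next
          case False then show ?thesis using k by simp
        qed
        then show "x \<in> nth s ` {..<k}" using q by auto
      qed
      show "nth s ` {..<k} \<subseteq> {x\<in>set y. x > int (m - k)}"
      proof
        fix x assume "x \<in> nth s ` {..<k}"
        then obtain q where q: "q < k" "x = s!q" by auto
        have qm: "q < m" using q k by simp
        have "s!q > int (m - k)"
        proof (cases "L \<le> q")
          case True
          then have "s!q = int (m - q)" using snth[OF qm] ij vp(4) L qm by auto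
          then show ?thesis using q k by linarith
        next
          case False
          show ?thesis
          proof (rule ccontr)
            assume "\<not> s!q > int (m - k)"
            define r where "r = m - nat (s!q)"
            have sq: "s!q \<ge> 1" using spos[OF qm] by simp
            have rm: "r < m" "k \<le> r" using r_def sq \<open>\<not> s!q > int (m - k)\<close> k by auto
            have "s!r = int (m - r)" using snth[OF rm(1)] ij vp(4) L rm k by auto
            also have "\<dots> = s!q"
            proof -
              have "s!q \<le> int m" using \<open>\<not> s!q > int (m - k)\<close> k by linarith
              then show ?thesis using r_def sq by (simp add: of_nat_diff)
            qed
            finally have "s!r = s!q" .
            moreover have "r \<noteq> q" using rm q by simp
            ultimately show False using ds nth_eq_iff_index_eq[of s r q] rm qm ls by simp
          qed
        qed
        then show "x \<in> {x\<in>set y. x > int (m - k)}" using q qm sety ls by simp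
      qed
    qed
    moreover have "inj_on (nth s) {..<k}" using ds ls k by (intro inj_on_nth) auto
    ultimately have "card {x\<in>set y. x > int (m - k)} = k" by (simp add: card_image)
    moreover have "int (m - k) \<in> set y" using sk sety ls k nth_mem[of k s] by simp
    ultimately have "y!k = int (m - k)" using sdec_pos[OF sy] by blast
    then show "s!k = y!k" using sk by simp
  qed
  obtain \<pi> where "\<pi> \<in> WpD p m L" "\<pi> s = y"
    using WpD_sort[OF Lm ls ly _ sety[symmetric] tail] sdec_distinct[OF sy] by blast
  then show ?thesis using spos ls d1 d2 d3 mu_def y_def by (auto simp: in_set_conv_nth)
qed




lemma pair_facts:
  assumes sv: "sorted_wrt (>) (v::int list)" and lv: "length v = m" and ij: "i < j" "j < m"
    and a: "a \<ge> 1" and s: "s = v[i := v!i - a, j := v!j - a]" and ds: "distinct s"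
  shows "v!i \<notin> set s" "\<And>k. k < m \<Longrightarrow> k \<noteq> i \<Longrightarrow> k \<noteq> j \<Longrightarrow> v!k \<in> set s"
    "v!j \<in> set s \<Longrightarrow> a = v!i - v!j" "v!j - a \<in> set s"
    "\<And>t. t \<in> set s \<Longrightarrow> t \<in> set v \<or> t = v!i - a \<or> t = v!j - a"
    "v!j - a \<notin> set v" "v!j < v!i"
proof -
  have ls: "length s = m" using s lv by simp
  have im: "i < m" using ij by simp
  have snth: "\<And>k. k < m \<Longrightarrow> s!k = (if k = i then v!i - a else if k = j then v!j - a else v!k)"
    using s lv ij by (auto simp: nth_list_update)
  have dv: "distinct v" using sdec_distinct[OF sv] .
  have veq: "\<And>k k'. k < m \<Longrightarrow> k' < m \<Longrightarrow> v!k = v!k' \<longleftrightarrow> k = k'"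
    using dv lv nth_eq_iff_index_eq by metis
  have vij: "v!i > v!j" using sorted_wrt_nth_less[OF sv, of i j] ij lv by simp
  then show "v!j < v!i" .
  have memS: "\<And>t. t \<in> set s \<longleftrightarrow> (\<exists>k<m. s!k = t)" using ls by (auto simp: in_set_conv_nth)
  have memV: "\<And>t. t \<in> set v \<longleftrightarrow> (\<exists>k<m. v!k = t)" using lv by (auto simp: in_set_conv_nth)
  show "v!i \<notin> set s"
  proof
    assume "v!i \<in> set s"
    then obtain k where k: "k < m" "s!k = v!i" using memS by blast
    show False
    proof (cases "k = i \<or> k = j")
      case True then show ?thesis using k snth[OF k(1)] a vij ij by auto
    next
      case False then show ?thesis using k snth[OF k(1)] veq[OF k(1) im] by auto
    qed
  qed
  show "\<And>k. k < m \<Longrightarrow> k \<noteq> i \<Longrightarrow> k \<noteq> j \<Longrightarrow> v!k \<in> set s"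
    using memS snth by metis
  show "v!j \<in> set s \<Longrightarrow> a = v!i - v!j"
  proof -
    assume "v!j \<in> set s"
    then obtain k where k: "k < m" "s!k = v!j" using memS by blast
    show "a = v!i - v!j"
    proof (cases "k = i")
      case True then show ?thesis using k snth[OF k(1)] by auto
    next
      case False
      then show ?thesis using k snth[OF k(1)] veq[OF k(1) ij(2)] a by (auto split: if_splits)
    qed
  qed
  show "v!j - a \<in> set s" using memS snth[OF ij(2)] ij by (metis less_irrefl)
  show "\<And>t. t \<in> set s \<Longrightarrow> t \<in> set v \<or> t = v!i - a \<or> t = v!j - a"
    using memS memV snth by metis
  show "v!j - a \<notin> set v"
  proof
    assume "v!j - a \<in> set v"
    then obtain k where k: "k < m" "v!k = v!j - a" using memV by blast
    show False
    proof (cases "k = i \<or> k = j")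
      case True then show ?thesis using k a vij by auto
    next
      case False
      then have "s!k = s!j" using snth[OF k(1)] snth[OF ij(2)] k ij by auto
      then show ?thesis using ds nth_eq_iff_index_eq[of s k j] k ij ls False by simp
    qed
  qed
qed

lemma inj_pair:
  assumes sv: "sorted_wrt (>) (v::int list)" and lv: "length v = m"
    and ij: "i < j" "j < m" and a: "a \<ge> 1" and s: "s = v[i := v!i - a, j := v!j - a]" and ds: "distinct s"
    and ij': "i' < j'" "j' < m" and a': "a' \<ge> 1" and s': "s' = v[i' := v!i' - a', j' := v!j' - a']"
    and ds': "distinct s'"
    and eq: "set s = set s'"
  shows "i = i' \<and> j = j' \<and> a = a'"
proof -
  note F = pair_facts[OF sv lv ij a s ds]
  note G = pair_facts[OF sv lv ij' a' s' ds']
  have im: "i < m" "i' < m" using ij ij' by auto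
  have dv: "distinct v" using sdec_distinct[OF sv] .
  have veq: "\<And>k k'. k < m \<Longrightarrow> k' < m \<Longrightarrow> v!k = v!k' \<longleftrightarrow> k = k'"
    using dv lv nth_eq_iff_index_eq by metis
  have 1: "i = i' \<or> i = j'" using F(1) G(2)[OF im(1)] eq by blast
  have 2: "i' = i \<or> i' = j" using G(1) F(2)[OF im(2)] eq by blast
  have ii: "i = i'" using 1 2 ij ij' by auto
  have y1: "v!j - a = v!i - a' \<or> v!j - a = v!j' - a'"
    using G(5)[of "v!j - a"] F(4) F(6) eq ii by auto
  have y2: "v!j' - a' = v!i - a \<or> v!j' - a' = v!j - a"
    using F(5)[of "v!j' - a'"] G(4) G(6) eq ii by auto
  have g7: "v!j' < v!i" using G(7) ii by simp
  have yy: "v!j - a = v!j' - a'" using y1 y2 F(7) g7 by auto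
  have jj: "j = j'"
  proof (rule ccontr)
    assume nj: "j \<noteq> j'"
    have "v!j \<in> set s" using G(2)[OF ij(2)] eq ii ij nj by auto
    then have aa: "a = v!i - v!j" using F(3) by simp
    have "v!j' \<in> set s'" using F(2)[OF ij'(2)] eq ii ij' nj by auto
    then have aa': "a' = v!i - v!j'" using G(3) ii by simp
    have "v!j = v!j'" using yy aa aa' by linarith
    then show False using veq[OF ij(2) ij'(2)] nj by simp
  qed
  show ?thesis using ii jj yy by simp
qed




lemma vsub_inj: "length x = m \<Longrightarrow> length y = m \<Longrightarrow> vsub x (rho m) = vsub y (rho m) \<Longrightarrow> x = y"
proof -
  assume h: "length x = m" "length y = m" "vsub x (rho m) = vsub y (rho m)"
  have "\<forall>k<m. x!k = y!k"
  proof (intro allI impI)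
    fix k assume k: "k < m"
    have "vsub x (rho m) ! k = vsub y (rho m) ! k" using h by simp
    then show "x!k = y!k" using h(1,2) k by simp
  qed
  then show "x = y" using h by (simp add: list_eq_iff_nth_eq)
qed

theorem lemma2p3:
  fixes p m :: nat and lam :: "int list"
  assumes "prime p" and "p > 2" and "m \<ge> 1" and "p_core p m lam"
  defines "A \<equiv> {(\<alpha>, l). \<exists>i j. i < j \<and> j < lpart lam \<and> \<alpha> = vadd (eps m i) (eps m j) \<and> l \<ge> 1 \<and>
                 (\<exists>a::int. a \<ge> 1 \<and> coroot_pair (vadd lam (rho m)) \<alpha> = a + l * int p \<and>
                           vadd lam (rho m) ! j - a > 0) \<and>
                 \<not> weyl_char_zero m (dot (refl_aff p \<alpha> l) lam m)}"
    and "mu \<equiv> (\<lambda>(\<alpha>, l). vsub (sort_desc (refl_aff p \<alpha> l (vadd lam (rho m)))) (rho m))"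
  shows "(\<forall>(\<alpha>, l) \<in> A.
            distinct (refl_aff p \<alpha> l (vadd lam (rho m))) \<and>
            (\<forall>x \<in> set (refl_aff p \<alpha> l (vadd lam (rho m))). x > 0) \<and>
            dominant m (mu (\<alpha>, l)) \<and>
            wsubseteq (mu (\<alpha>, l)) lam \<and> mu (\<alpha>, l) \<noteq> lam \<and>
            (\<exists>w \<in> WpD p m (lpart lam). mu (\<alpha>, l) = dot w lam m))
         \<and> inj_on mu A"
proof -
  have dom: "dominant m lam" using assms(4) by (simp add: p_core_def)
  define v where "v = vadd lam (rho m)"
  note vp = v_props[OF dom v_def]
  have Lm: "lpart lam \<le> m" using lpart_props(1)[OF dom] .
  have pp: "p > 0" using assms(2) by simp
  have key: "\<And>\<alpha> l. (\<alpha>, l) \<in> A \<Longrightarrow> \<exists>i j a. i < j \<and> j < lpart lam \<and> \<alpha> = vadd (eps m i) (eps m j) \<and>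
      a \<ge> 1 \<and> v!j - a > 0 \<and> v!i + v!j = a + l * int p \<and>
      refl_aff p \<alpha> l v = v[i := v!i - a, j := v!j - a] \<and> distinct (refl_aff p \<alpha> l v)"
  proof -
    fix \<alpha> l assume "(\<alpha>, l) \<in> A"
    then obtain i j a where h: "i < j" "j < lpart lam" "\<alpha> = vadd (eps m i) (eps m j)"
      "a \<ge> 1" "coroot_pair v \<alpha> = a + l * int p" "v!j - a > 0"
      "\<not> weyl_char_zero m (dot (refl_aff p \<alpha> l) lam m)"
      unfolding A_def v_def by blast
    have im: "i < m" "j < m" "i \<noteq> j" using h(1,2) Lm by auto
    have cp: "coroot_pair v \<alpha> = v!i + v!j" using coroot_plus[OF vp(1) im] h(3) by simp
    have ca: "v!i + v!j - l * int p = a" using cp h(5) by simp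
    have r: "refl_aff p \<alpha> l v = v[i := v!i - a, j := v!j - a]"
      using refl_plus[OF vp(1) im, of p l] h(3) ca by simp
    define s where "s = refl_aff p \<alpha> l v"
    have ls: "length s = m" using r s_def vp(1) by simp
    have dv: "vadd (dot (refl_aff p \<alpha> l) lam m) (rho m) = s"
      unfolding dot_def v_def[symmetric] s_def[symmetric]
      by (rule nth_equalityI) (simp_all add: ls)
    have nw: "\<forall>q<m. \<forall>q'<m. q \<noteq> q' \<longrightarrow> \<bar>s!q\<bar> \<noteq> \<bar>s!q'\<bar>"
      using h(7) unfolding weyl_char_zero_def Let_def dv by blast
    have "distinct s" unfolding distinct_conv_nth using nw ls by fastforce
    then show "\<exists>i j a. i < j \<and> j < lpart lam \<and> \<alpha> = vadd (eps m i) (eps m j) \<and>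
      a \<ge> 1 \<and> v!j - a > 0 \<and> v!i + v!j = a + l * int p \<and>
      refl_aff p \<alpha> l v = v[i := v!i - a, j := v!j - a] \<and> distinct (refl_aff p \<alpha> l v)"
      using h(1-4,6) r cp ca unfolding s_def by (intro exI[of _ i] exI[of _ j] exI[of _ a]) simp
  qed
  have part1: "\<forall>(\<alpha>, l) \<in> A.
            distinct (refl_aff p \<alpha> l v) \<and>
            (\<forall>x \<in> set (refl_aff p \<alpha> l v). x > 0) \<and>
            dominant m (mu (\<alpha>, l)) \<and>
            wsubseteq (mu (\<alpha>, l)) lam \<and> mu (\<alpha>, l) \<noteq> lam \<and>
            (\<exists>w \<in> WpD p m (lpart lam). mu (\<alpha>, l) = dot w lam m)"
  proof (intro ballI, clarify)
    fix \<alpha> l assume inA: "(\<alpha>, l) \<in> A"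
    obtain i j a where h: "i < j" "j < lpart lam" "\<alpha> = vadd (eps m i) (eps m j)"
      "a \<ge> 1" "v!j - a > 0" "v!i + v!j = a + l * int p"
      "refl_aff p \<alpha> l v = v[i := v!i - a, j := v!j - a]" "distinct (refl_aff p \<alpha> l v)"
      using key[OF inA] by blast
    define s where "s = refl_aff p \<alpha> l v"
    have E: "(\<forall>x\<in>set s. x > 0) \<and> dominant m (vsub (sort_desc s) (rho m)) \<and>
       wsubseteq (vsub (sort_desc s) (rho m)) lam \<and> vsub (sort_desc s) (rho m) \<noteq> lam \<and>
       (\<exists>\<pi>\<in>WpD p m (lpart lam). \<pi> s = sort_desc s)"
      using elem[OF dom v_def refl h(1) h(2) h(4) h(5), of s p] h(7,8) s_def by simp
    have muE: "mu (\<alpha>, l) = vsub (sort_desc s) (rho m)" using assms(6) s_def v_def by simp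
    obtain \<pi> where pi: "\<pi> \<in> WpD p m (lpart lam)" "\<pi> s = sort_desc s" using E by blast
    have rw: "refl_aff p \<alpha> l \<in> WpD p m (lpart lam)"
      using WpD.WpD_step[OF WpD.WpD_id, where i=i and j=j and t="lpart lam" and p=p and m=m
          and \<alpha>=\<alpha> and l=l] h(1,2,3) by simp
    have w: "\<pi> \<circ> refl_aff p \<alpha> l \<in> WpD p m (lpart lam)" using WpD_comp[OF pi(1) rw] .
    have "dot (\<pi> \<circ> refl_aff p \<alpha> l) lam m = mu (\<alpha>, l)"
      unfolding dot_def muE using pi(2) s_def v_def by simp
    then have "\<exists>w \<in> WpD p m (lpart lam). mu (\<alpha>, l) = dot w lam m" using w by metis
    then show "distinct (refl_aff p \<alpha> l v) \<and>
            (\<forall>x \<in> set (refl_aff p \<alpha> l v). x > 0) \<and>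
            dominant m (mu (\<alpha>, l)) \<and>
            wsubseteq (mu (\<alpha>, l)) lam \<and> mu (\<alpha>, l) \<noteq> lam \<and>
            (\<exists>w \<in> WpD p m (lpart lam). mu (\<alpha>, l) = dot w lam m)"
      using E h(8) muE s_def by simp
  qed
  have part2: "inj_on mu A"
  proof (rule inj_onI, clarify)
    fix \<alpha> l \<alpha>' l' assume inA: "(\<alpha>, l) \<in> A" and inA': "(\<alpha>', l') \<in> A"
      and eq: "mu (\<alpha>, l) = mu (\<alpha>', l')"
    obtain i j a where h: "i < j" "j < lpart lam" "\<alpha> = vadd (eps m i) (eps m j)"
      "a \<ge> 1" "v!j - a > 0" "v!i + v!j = a + l * int p"
      "refl_aff p \<alpha> l v = v[i := v!i - a, j := v!j - a]" "distinct (refl_aff p \<alpha> l v)"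
      using key[OF inA] by blast
    obtain i' j' a' where h': "i' < j'" "j' < lpart lam" "\<alpha>' = vadd (eps m i') (eps m j')"
      "a' \<ge> 1" "v!j' - a' > 0" "v!i' + v!j' = a' + l' * int p"
      "refl_aff p \<alpha>' l' v = v[i' := v!i' - a', j' := v!j' - a']" "distinct (refl_aff p \<alpha>' l' v)"
      using key[OF inA'] by blast
    define s where "s = refl_aff p \<alpha> l v"
    define s' where "s' = refl_aff p \<alpha>' l' v"
    have ls: "length (sort_desc s) = m" "length (sort_desc s') = m"
      using h(7) h'(7) vp(1) s_def s'_def by (simp_all add: sort_desc_def)
    have "vsub (sort_desc s) (rho m) = vsub (sort_desc s') (rho m)"
      using eq assms(6) s_def s'_def v_def by simp
    then have "sort_desc s = sort_desc s'" using vsub_inj ls by blast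
    then have "set s = set s'" by (metis set_rev set_sort sort_desc_def)
    then have iii: "i = i' \<and> j = j' \<and> a = a'"
      using inj_pair[OF vp(2) vp(1) h(1) _ h(4) h(7)[folded s_def] h(8)[folded s_def]
            h'(1) _ h'(4) h'(7)[folded s'_def] h'(8)[folded s'_def]] h(2) h'(2) Lm by simp
    have "l * int p = l' * int p" using h(6) h'(6) iii by auto
    then have "l = l'" using pp by simp
    then show "\<alpha> = \<alpha>' \<and> l = l'" using h(3) h'(3) iii by simp
  qed
  show ?thesis using part1 part2 unfolding v_def by simp
qed


end
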